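(* Consider NSGA-III (as described in the context) with population size $\mu \ge n+1$ and $\mu = \mathrm{poly}(n)$, nadir threshold $\varepsilon_{\mathrm{nad}} \ge n$ and reference-point parameter $p \ge 4\sqrt{2}\,n$, maximizing $2$-OMM on $\{0,1\}^n$, and let $c>0$ be a constant. Then, with probability $1-o(1)$, after $cn/\ln(n)$ generations there is no $y \in P_t$ with $|y|_1 \ge 3n/4$.
   Context: For $x\in\{0,1\}^n$ let $|x|_1$ be its number of ones and $|x|_0 = n-|x|_1$ its number of zeros. The bi-objective function $2$-OMM$\colon \{0,1\}^n\to\mathbb{N}_0^2$ is $x\mapsto (|x|_1,|x|_0)$, to be maximized. NSGA-III with population size $\mu$ works as follows. $P_0$ consists of $\mu$ independent uniformly random bit strings. In generation $t$, an offspring multiset $Q_t$ of $\mu$ individuals is created, each by choosing a parent uniformly at random from $P_t$ and flipping each bit independently with probability $1/n$. $R_t=P_t\cup Q_t$ is partitioned by non-dominated sorting into fronts $F^1_t,F^2_t,\dots$ ($F^1_t$ the non-dominated individuals, $F^i_t$ those dominated only by individuals of earlier fronts); let $i^*$ be minimal with $\sum_{i\le i^*}|F^i_t|\ge\mu$; all individuals of $F^1_t,\dots,F^{i^*-1}_t$ survive and the rest are selected from $F^{i^*}_t$ as follows. Objectives are normalized as $f^n_j(x)=(f_j(x)-y_j^{\min})/(y_j^{\mathrm{nad}}-y_j^{\min})$, where $y^{\min}_j$ is the minimum value of objective $j$ seen so far and the nadir point $y^{\mathrm{nad}}$ is computed by the procedure of Wietheger and Doerr (2023), satisfying $y^{\mathrm{nad}}_j\ge\varepsilon_{\mathrm{nad}}$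 for a user threshold $\varepsilon_{\mathrm{nad}}>0$. The reference points are $\mathcal{R}_p=\{(a_1/p,\dots,a_m/p): a_i\in\mathbb{N}_0,\sum a_i=p\}$ ($m$ the number of objectives). Each individual is associated with the reference point $r$ minimizing the distance from its normalized vector to the line through the origin and $r$. Then repeatedly a reference point $r$ with the fewest already selected associated individuals (counting the individuals of earlier fronts; ties broken uniformly at random) is chosen; among the not-yet-selected individuals of $F^{i^*}_t$ associated with $r$, one whose normalized vector is closest to $r$ is selected (ties broken at random); if none exists, $r$ is discarded; this stops when $\mu$ individuals are selected in total, giving $P_{t+1}$. Asymptotic notation refers to $n\to\infty$. *)

theory Defs
  imports "HOL-Probability.Probability" "HOL-Library.Landau_Symbols"
begin

definition ones :: "bool list \<Rightarrow> nat" where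
  "ones x = length (filter id x)"

definition zeros :: "bool list \<Rightarrow> nat" where
  "zeros x = length x - ones x"

definition omm :: "bool list \<Rightarrow> real \<times> real" where
  "omm x = (real (ones x), real (zeros x))"

definition dominates :: "real \<times> real \<Rightarrow> real \<times> real \<Rightarrow> bool" where
  "dominates a b \<longleftrightarrow> fst b \<le> fst a \<and> snd b \<le> snd a \<and> a \<noteq> b"

fun iid_list :: "nat \<Rightarrow> 'a pmf \<Rightarrow> 'a list pmf" where
  "iid_list 0 D = return_pmf []"
| "iid_list (Suc k) D = bind_pmf D (\<lambda>x. map_pmf (\<lambda>xs. x # xs) (iid_list k D))"

fun mutate :: "nat \<Rightarrow> bool list \<Rightarrow> bool list pmf" where
  "mutate n [] = return_pmf []"
| "mutate n (b # bs) = bind_pmf (bernoulli_pmf (1 / real n))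
      (\<lambda>f. map_pmf (\<lambda>r. (b \<noteq> f) # r) (mutate n bs))"

fun nd_sort :: "nat \<Rightarrow> (nat \<Rightarrow> real \<times> real) \<Rightarrow> nat set \<Rightarrow> nat set list" where
  "nd_sort 0 v S = []"
| "nd_sort (Suc k) v S = (if S = {} then [] else
     (let F = {i \<in> S. \<not> (\<exists>j\<in>S. dominates (v j) (v i))} in F # nd_sort k v (S - F)))"

definition refpt :: "nat \<Rightarrow> nat \<Rightarrow> real \<times> real" where
  "refpt p a = (real a / real p, real (p - a) / real p)"

definition refline :: "nat \<Rightarrow> nat \<Rightarrow> (real \<times> real) set" where
  "refline p a = range (\<lambda>t::real. t *\<^sub>R refpt p a)"

text \<open>niche fuel mu L as d Rav Sel: L = critical front, as i = associated reference point
  (index a in 0..p), d i = distance of normalized vector of i to its reference point,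
  Rav = not yet discarded reference points, Sel = already selected indices.\<close>
fun niche :: "nat \<Rightarrow> nat \<Rightarrow> nat set \<Rightarrow> (nat \<Rightarrow> nat) \<Rightarrow> (nat \<Rightarrow> real) \<Rightarrow> nat set \<Rightarrow> nat set
    \<Rightarrow> nat set pmf" where
  "niche 0 mu L as d Rav Sel = return_pmf Sel"
| "niche (Suc k) mu L as d Rav Sel =
     (if mu \<le> card Sel \<or> Rav = {} then return_pmf Sel else
       (let cnt = (\<lambda>r. card {i \<in> Sel. as i = r}); m = Min (cnt ` Rav) in
        bind_pmf (pmf_of_set {r \<in> Rav. cnt r = m}) (\<lambda>r.
          (let C = {i \<in> L - Sel. as i = r} in
           if C = {} then niche k mu L as d (Rav - {r}) Sel
           else (let dm = Min (d ` C) in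
                 bind_pmf (pmf_of_set {i \<in> C. d i = dm})
                   (\<lambda>i. niche k mu L as d Rav (insert i Sel)))))))"

text \<open>Survival selection of NSGA-III on R (a list of 2 mu individuals), given the history
  H' of all R's so far (for y_min) and the nadir point nd. Returns the selected index set.\<close>
definition survival :: "nat \<Rightarrow> nat \<Rightarrow> real \<times> real \<Rightarrow> bool list list list \<Rightarrow> bool list list
    \<Rightarrow> nat set pmf" where
  "survival mu p nd H' R =
    (let v = (\<lambda>i. omm (R ! i));
         N = length R;
         Fs = nd_sort N v {..<N};
         istar = (LEAST i. mu \<le> (\<Sum>F\<leftarrow>take (Suc i) Fs. card F));
         Sel0 = \<Union> (set (take istar Fs));
         L = Fs ! istar;
         ymin = (Min ((\<lambda>x. real (ones x)) ` set (concat H')),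
                 Min ((\<lambda>x. real (zeros x)) ` set (concat H')));
         fn = (\<lambda>i. ((fst (v i) - fst ymin) / (fst nd - fst ymin),
                    (snd (v i) - snd ymin) / (snd nd - snd ymin)));
         as = (\<lambda>i. LEAST a. a \<le> p \<and>
                   (\<forall>b\<le>p. infdist (fn i) (refline p a) \<le> infdist (fn i) (refline p b)));
         d = (\<lambda>i. dist (fn i) (refpt p (as i)))
     in niche (card L + p + 1) mu L as d {..p} Sel0)"

text \<open>State: current population and history of all combined populations R_0..R_{t-1}.
  nadf maps the history (including the current R_t) to the nadir point.\<close>
definition nsga3_step :: "nat \<Rightarrow> nat \<Rightarrow> nat \<Rightarrow> (bool list list list \<Rightarrow> real \<times> real)
    \<Rightarrow> bool list list \<times> bool list list list \<Rightarrow> (bool list list \<times> bool list list list) pmf" where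
  "nsga3_step n mu p nadf = (\<lambda>(P, H).
     bind_pmf (iid_list mu (bind_pmf (pmf_of_set {..<length P}) (\<lambda>i. mutate n (P ! i))))
       (\<lambda>Q. let R = P @ Q; H' = H @ [R] in
            map_pmf (\<lambda>S. (map (\<lambda>i. R ! i) (sorted_list_of_set S), H'))
                    (survival mu p (nadf H') H' R)))"

fun nsga3_run :: "nat \<Rightarrow> nat \<Rightarrow> nat \<Rightarrow> (bool list list list \<Rightarrow> real \<times> real) \<Rightarrow> nat
    \<Rightarrow> (bool list list \<times> bool list list list) pmf" where
  "nsga3_run n mu p nadf 0 =
     map_pmf (\<lambda>P. (P, [])) (iid_list mu (pmf_of_set {x :: bool list. length x = n}))"
| "nsga3_run n mu p nadf (Suc t) = bind_pmf (nsga3_run n mu p nadf t) (nsga3_step n mu p nadf)"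

end

theory Submission
  imports Defs "HOL-Real_Asymp.Real_Asymp"
begin

lemma measure_bind_pmf_real:
  "measure_pmf.prob (bind_pmf M N) X = (\<integral>x. measure_pmf.prob (N x) X \<partial>M)"
proof -
  have "emeasure (bind_pmf M N) X = (\<integral>\<^sup>+x. ennreal (measure_pmf.prob (N x) X) \<partial>M)"
    by (simp only: measure_pmf.emeasure_eq_measure[symmetric] emeasure_bind_pmf)
  also have "\<dots> = ennreal (\<integral>x. measure_pmf.prob (N x) X \<partial>M)"
    by (rule nn_integral_eq_integral) (auto intro!: measure_pmf.integrable_const_bound[where B=1])
  finally show ?thesis
    by (simp add: measure_pmf.emeasure_eq_measure)
qed

lemma prob_bind_le:
  assumes "\<And>x. x \<in> set_pmf M \<Longrightarrow> x \<in> G \<Longrightarrow> measure_pmf.prob (N x) B \<le> b" and "b \<ge> 0"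
  shows "measure_pmf.prob (bind_pmf M N) B \<le> measure_pmf.prob M (- G) + b"
proof -
  have "measure_pmf.prob (bind_pmf M N) B = (\<integral>x. measure_pmf.prob (N x) B \<partial>M)"
    by (rule measure_bind_pmf_real)
  also have "\<dots> \<le> (\<integral>x. indicator (- G) x + b \<partial>M)"
  proof (rule integral_mono_AE)
    show "integrable (measure_pmf M) (\<lambda>x. measure_pmf.prob (N x) B)"
      by (auto intro!: measure_pmf.integrable_const_bound[where B=1])
    show "integrable (measure_pmf M) (\<lambda>x. indicator (- G) x + b)"
      by (auto intro!: measure_pmf.integrable_const_bound[where B="1 + \<bar>b\<bar>"] simp: indicator_def)
    show "AE x in measure_pmf M. measure_pmf.prob (N x) B \<le> indicator (- G) x + b"
      using assms by (auto simp: AE_measure_pmf_iff indicator_def intro: order.trans[OF measure_pmf.prob_le_1])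
  qed
  also have "\<dots> = measure_pmf.prob M (- G) + b"
    by (subst Bochner_Integration.integral_add) (auto intro!: measure_pmf.integrable_const_bound[where B=1] simp: indicator_def)
  finally show ?thesis .
qed

lemma prob_mono_support:
  assumes "\<And>x. x \<in> set_pmf M \<Longrightarrow> x \<in> A \<Longrightarrow> x \<in> B"
  shows "measure_pmf.prob M A \<le> measure_pmf.prob M B"
proof -
  have "measure_pmf.prob M A = measure_pmf.prob M (A \<inter> set_pmf M)"
    by (simp add: measure_Int_set_pmf)
  also have "\<dots> \<le> measure_pmf.prob M B"
    using assms by (intro measure_pmf.finite_measure_mono) auto
  finally show ?thesis .
qed

lemma ones_Nil[simp]: "ones [] = 0" and ones_Cons[simp]: "ones (b # r) = (if b then 1 else 0) + ones r"
  by (auto simp: ones_def)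

lemma ones_le_length: "ones x \<le> length x"
  by (simp add: ones_def)

lemma set_pmf_mutate: "y \<in> set_pmf (mutate n x) \<Longrightarrow> length y = length x"
  by (induction n x arbitrary: y rule: mutate.induct) auto

lemma mutate_tail:
  "measure_pmf.prob (mutate n x) {y. ones x + j \<le> ones y} \<le> real (length x choose j) * (1 / real n) ^ j"
proof (induction x arbitrary: j)
  case Nil
  then show ?case by (cases j) auto
next
  case (Cons b bs)
  define q where "q = 1 / real n"
  have q0: "0 \<le> q" and q1: "q \<le> 1" by (auto simp: q_def divide_le_eq)
  show ?case
  proof (cases j)
    case 0
    then show ?thesis by (simp add: measure_pmf.prob_le_1)
  next
    case (Suc j')
    have eq: "measure_pmf.prob (mutate n (b # bs)) {y. ones (b # bs) + j \<le> ones y}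
      = (\<integral>f. measure_pmf.prob (mutate n bs) {r. ones (b#bs) + j \<le> ones ((b \<noteq> f) # r)} \<partial>bernoulli_pmf q)"
      by (simp add: measure_bind_pmf_real q_def vimage_def)
    also have "\<dots> = q * measure_pmf.prob (mutate n bs) {r. ones (b#bs) + j \<le> ones ((b \<noteq> True) # r)}
        + (1 - q) * measure_pmf.prob (mutate n bs) {r. ones (b#bs) + j \<le> ones ((b \<noteq> False) # r)}"
      using q0 q1 by (simp add: algebra_simps)
    also have "\<dots> \<le> q * (real (length bs choose j') * q ^ j') + (1 - q) * (real (length bs choose j) * q ^ j)"
    proof (intro add_mono mult_left_mono)
      have "measure_pmf.prob (mutate n bs) {r. ones (b#bs) + j \<le> ones ((b \<noteq> True) # r)}
          \<le> measure_pmf.prob (mutate n bs) {r. ones bs + j' \<le> ones r}"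
        by (intro prob_mono_support) (auto simp: Suc split: if_splits)
      also have "\<dots> \<le> real (length bs choose j') * q ^ j'" using Cons.IH[of j'] by (simp add: q_def)
      finally show "measure_pmf.prob (mutate n bs) {r. ones (b#bs) + j \<le> ones ((b \<noteq> True) # r)}
          \<le> real (length bs choose j') * q ^ j'" .
      have "measure_pmf.prob (mutate n bs) {r. ones (b#bs) + j \<le> ones ((b \<noteq> False) # r)}
          \<le> measure_pmf.prob (mutate n bs) {r. ones bs + j \<le> ones r}"
        by (intro prob_mono_support) (auto split: if_splits)
      also have "\<dots> \<le> real (length bs choose j) * q ^ j" using Cons.IH[of j] by (simp add: q_def)
      finally show "measure_pmf.prob (mutate n bs) {r. ones (b#bs) + j \<le> ones ((b \<noteq> False) # r)}
          \<le> real (length bs choose j) * q ^ j" .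
    qed (use q0 q1 in auto)
    also have "\<dots> \<le> real (length bs choose j') * q ^ j + real (length bs choose j) * q ^ j"
      using q0 q1 by (auto simp: Suc intro!: mult_left_le_one_le mult_nonneg_nonneg)
    also have "\<dots> = real (length (b # bs) choose j) * q ^ j"
      by (simp add: Suc algebra_simps)
    finally show ?thesis by (simp add: q_def)
  qed
qed

lemma set_pmf_iid_list: "xs \<in> set_pmf (iid_list k D) \<Longrightarrow> length xs = k \<and> set xs \<subseteq> set_pmf D"
  by (induction k arbitrary: xs) fastforce+

lemma iid_list_union:
  "measure_pmf.prob (iid_list k D) {xs. \<exists>x\<in>set xs. x \<in> Bad} \<le> real k * measure_pmf.prob D Bad"
proof (induction k)
  case 0
  then show ?case by simp
next
  case (Suc k)
  have "measure_pmf.prob (iid_list (Suc k) D) {xs. \<exists>x\<in>set xs. x \<in> Bad}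
      \<le> measure_pmf.prob D (- (- Bad)) + real k * measure_pmf.prob D Bad"
    unfolding iid_list.simps
  proof (rule prob_bind_le)
    fix x assume "x \<in> - Bad"
    then show "measure_pmf.prob (map_pmf ((#) x) (iid_list k D)) {xs. \<exists>x\<in>set xs. x \<in> Bad}
        \<le> real k * measure_pmf.prob D Bad"
      using Suc.IH by (simp add: vimage_def)
  qed simp
  then show ?case by (simp add: algebra_simps)
qed

lemma sum_lists_pow:
  fixes lam :: real
  shows "(\<Sum>x\<in>{x :: bool list. length x = n}. lam ^ ones x) = (1 + lam) ^ n"
proof (induction n)
  case 0
  then show ?case by simp
next
  case (Suc n)
  have eq: "{x :: bool list. length x = Suc n} = (\<lambda>(b, xs). b # xs) ` (UNIV \<times> {x. length x = n})"
    by (auto simp: image_iff length_Suc_conv)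
  have inj: "inj_on (\<lambda>(b, xs). b # xs) (UNIV \<times> {x :: bool list. length x = n})"
    by (auto simp: inj_on_def)
  have fin: "finite {x :: bool list. length x = n}"
    using finite_lists_length_eq[of "UNIV :: bool set" n] by simp
  have "(\<Sum>x\<in>{x :: bool list. length x = Suc n}. lam ^ ones x)
      = (\<Sum>(b, xs)\<in>UNIV \<times> {x. length x = n}. lam ^ ones (b # xs))"
    unfolding eq by (subst sum.reindex[OF inj]) (simp add: case_prod_unfold)
  also have "\<dots> = (\<Sum>b\<in>UNIV. \<Sum>xs\<in>{x. length x = n}. lam ^ ones (b # xs))"
    by (rule sum.cartesian_product[symmetric])
  also have "\<dots> = (1 + lam) * (1 + lam) ^ n"
    by (simp add: UNIV_bool sum_distrib_left[symmetric] Suc.IH algebra_simps)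
  finally show ?case by simp
qed

lemma card_lists_n: "card {x :: bool list. length x = n} = 2 ^ n"
  using card_lists_length_eq[of "UNIV :: bool set" n] by simp

lemma uniform_tail:
  "measure_pmf.prob (pmf_of_set {x :: bool list. length x = n}) {y. m \<le> ones y}
     \<le> (3 / 2) ^ n / 2 ^ m"
proof -
  let ?S = "{x :: bool list. length x = n}"
  have fin: "finite ?S"
    using finite_lists_length_eq[of "UNIV :: bool set" n] by simp
  have ne: "?S \<noteq> {}" by (auto intro: exI[of _ "replicate n True"])
  have "real (card (?S \<inter> {y. m \<le> ones y})) = (\<Sum>x\<in>?S \<inter> {y. m \<le> ones y}. 1)"
    by simp
  also have "\<dots> \<le> (\<Sum>x\<in>?S \<inter> {y. m \<le> ones y}. (2::real) ^ ones x / 2 ^ m)"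
    by (intro sum_mono) (auto simp: power_increasing)
  also have "\<dots> \<le> (\<Sum>x\<in>?S. (2::real) ^ ones x / 2 ^ m)"
    by (intro sum_mono2 fin) auto
  also have "\<dots> = 3 ^ n / 2 ^ m"
    by (simp add: sum_divide_distrib[symmetric] sum_lists_pow)
  finally have c: "real (card (?S \<inter> {y. m \<le> ones y})) \<le> 3 ^ n / 2 ^ m" .
  have "measure_pmf.prob (pmf_of_set ?S) {y. m \<le> ones y} = real (card (?S \<inter> {y. m \<le> ones y})) / 2 ^ n"
    using fin ne by (simp add: measure_pmf_of_set card_lists_n)
  also have "\<dots> \<le> (3 ^ n / 2 ^ m) / 2 ^ n"
    using c by (intro divide_right_mono) auto
  also have "\<dots> = (3 / 2) ^ n / 2 ^ m"
    by (simp add: power_divide)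
  finally show ?thesis .
qed

lemma dominates_sum: "dominates a b \<Longrightarrow> fst b + snd b < fst a + snd a"
  by (cases a; cases b) (auto simp: dominates_def)

lemma nd_nonempty:
  assumes "finite S" "S \<noteq> {}"
  shows "{i \<in> S. \<not> (\<exists>j\<in>S. dominates (v j) (v i))} \<noteq> {}"
proof -
  let ?g = "\<lambda>i. fst (v i) + snd (v i)"
  have "Max (?g ` S) \<in> ?g ` S" using assms by (intro Max_in) auto
  then obtain i where i: "i \<in> S" "?g i = Max (?g ` S)" by auto
  have "\<not> dominates (v j) (v i)" if "j \<in> S" for j
  proof
    assume "dominates (v j) (v i)"
    then have "?g i < ?g j" by (rule dominates_sum)
    moreover have "?g j \<le> ?g i" using i that assms by (simp add: Max_ge)
    ultimately show False by simp
  qed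
  then show ?thesis using i by auto
qed

lemma nd_sort_sets: "finite S \<Longrightarrow> F \<in> set (nd_sort k v S) \<Longrightarrow> F \<subseteq> S \<and> F \<noteq> {}"
proof (induction k arbitrary: S)
  case 0
  then show ?case by simp
next
  case (Suc k)
  show ?case
  proof (cases "S = {}")
    case True
    then show ?thesis using Suc.prems by simp
  next
    case False
    let ?F = "{i \<in> S. \<not> (\<exists>j\<in>S. dominates (v j) (v i))}"
    have "F = ?F \<or> F \<in> set (nd_sort k v (S - ?F))"
      using Suc.prems False by (simp add: Let_def)
    then show ?thesis
    proof
      assume "F = ?F" then show ?thesis using nd_nonempty[OF Suc.prems(1) False, of v] by auto
    next
      assume "F \<in> set (nd_sort k v (S - ?F))"
      then show ?thesis using Suc.IH[of "S - ?F"] Suc.prems by auto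
    qed
  qed
qed

lemma nd_sort_sum: "finite S \<Longrightarrow> card S \<le> k \<Longrightarrow> (\<Sum>F\<leftarrow>nd_sort k v S. card F) = card S"
proof (induction k arbitrary: S)
  case 0
  then show ?case by simp
next
  case (Suc k)
  show ?case
  proof (cases "S = {}")
    case True
    then show ?thesis by simp
  next
    case False
    let ?F = "{i \<in> S. \<not> (\<exists>j\<in>S. dominates (v j) (v i))}"
    have ne: "?F \<noteq> {}" using nd_nonempty[OF Suc.prems(1) False, of v] .
    have fin: "finite ?F" using Suc.prems(1) by auto
    have sub: "?F \<subseteq> S" by auto
    have cF: "card ?F \<ge> 1" using ne fin by (simp add: Suc_le_eq card_gt_0_iff)
    have cd: "card (S - ?F) = card S - card ?F" using sub fin by (simp add: card_Diff_subset)
    have cle: "card ?F \<le> card S" using sub Suc.prems(1) by (simp add: card_mono)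
    have "(\<Sum>F\<leftarrow>nd_sort (Suc k) v S. card F) = card ?F + (\<Sum>F\<leftarrow>nd_sort k v (S - ?F). card F)"
      using False by (simp add: Let_def)
    also have "\<dots> = card ?F + card (S - ?F)"
      using Suc.prems cF cd by (subst Suc.IH) auto
    also have "\<dots> = card S" using cd cle by simp
    finally show ?thesis .
  qed
qed

lemma niche_inv:
  assumes "finite L" "finite Sel" "finite Rav" "\<forall>i\<in>L - Sel. as i \<in> Rav"
    "card (L - Sel) + card Rav \<le> k" "S' \<in> set_pmf (niche k mu L as d Rav Sel)"
  shows "Sel \<subseteq> S' \<and> S' \<subseteq> Sel \<union> L \<and> (mu \<le> card S' \<or> L \<subseteq> S')"
  using assms
proof (induction k arbitrary: Rav Sel S')
  case 0
  then show ?case by auto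
next
  case (Suc k)
  show ?case
  proof (cases "mu \<le> card Sel \<or> Rav = {}")
    case True
    then show ?thesis using Suc.prems by auto
  next
    case False
    define cnt where "cnt = (\<lambda>r. card {i \<in> Sel. as i = r})"
    define m where "m = Min (cnt ` Rav)"
    have "m \<in> cnt ` Rav" unfolding m_def using False Suc.prems(3) by (intro Min_in) auto
    then have neR: "{r \<in> Rav. cnt r = m} \<noteq> {}" by auto
    have finR: "finite {r \<in> Rav. cnt r = m}" using Suc.prems(3) by auto
    from Suc.prems(6) False obtain r where r: "r \<in> {r \<in> Rav. cnt r = m}" and
      S'r: "S' \<in> set_pmf (let C = {i \<in> L - Sel. as i = r} in
           if C = {} then niche k mu L as d (Rav - {r}) Sel
           else (let dm = Min (d ` C) in
                 bind_pmf (pmf_of_set {i \<in> C. d i = dm})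
                   (\<lambda>i. niche k mu L as d Rav (insert i Sel))))"
      using neR finR by (auto simp: Let_def cnt_def m_def)
    define C where "C = {i \<in> L - Sel. as i = r}"
    have S'C: "S' \<in> set_pmf (if C = {} then niche k mu L as d (Rav - {r}) Sel
           else bind_pmf (pmf_of_set {i \<in> C. d i = Min (d ` C)})
                   (\<lambda>i. niche k mu L as d Rav (insert i Sel)))"
      using S'r unfolding C_def Let_def .
    show ?thesis
    proof (cases "C = {}")
      case True
      then have S'1: "S' \<in> set_pmf (niche k mu L as d (Rav - {r}) Sel)" using S'C by simp
      have "card (Rav - {r}) = card Rav - 1" using r by simp
      moreover have "card Rav \<ge> 1" using r Suc.prems(3) by (simp add: Suc_le_eq card_gt_0_iff) blast
      ultimately have "card (L - Sel) + card (Rav - {r}) \<le> k" using Suc.prems(5) by simp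
      moreover have "\<forall>i\<in>L - Sel. as i \<in> Rav - {r}" using True Suc.prems(4) by (auto simp: C_def)
      ultimately show ?thesis using Suc.IH[OF Suc.prems(1,2) _ _ _ S'1] Suc.prems(3) by auto
    next
      case False
      define dm where "dm = Min (d ` C)"
      have finC: "finite C" using Suc.prems(1) by (auto simp: C_def)
      have "dm \<in> d ` C" unfolding dm_def using False finC by (intro Min_in) auto
      then have neC: "{i \<in> C. d i = dm} \<noteq> {}" by auto
      have "S' \<in> set_pmf (bind_pmf (pmf_of_set {i \<in> C. d i = dm}) (\<lambda>i. niche k mu L as d Rav (insert i Sel)))"
        using S'C False by (simp add: dm_def)
      then obtain i where i: "i \<in> C" and S'1: "S' \<in> set_pmf (niche k mu L as d Rav (insert i Sel))"
        using neC finC by auto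
      have iL: "i \<in> L - Sel" using i by (auto simp: C_def)
      have "card (L - insert i Sel) = card (L - Sel) - 1"
        using iL by (metis Diff_insert card_Diff_singleton)
      moreover have "card (L - Sel) \<ge> 1" using iL Suc.prems(1) by (simp add: Suc_le_eq card_gt_0_iff) blast
      ultimately have "card (L - insert i Sel) + card Rav \<le> k" using Suc.prems(5) by simp
      moreover have "\<forall>j\<in>L - insert i Sel. as j \<in> Rav" using Suc.prems(4) by auto
      ultimately have "insert i Sel \<subseteq> S' \<and> S' \<subseteq> insert i Sel \<union> L \<and> (mu \<le> card S' \<or> L \<subseteq> S')"
        using Suc.IH[OF Suc.prems(1) _ Suc.prems(3) _ _ S'1] Suc.prems(2) by auto
      then show ?thesis using iL by auto
    qed
  qed
qed

lemma survival_shape: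
  assumes mu1: "1 \<le> mu" and muR: "mu \<le> length R" and S: "S \<in> set_pmf (survival mu p nd H' R)"
  shows "S \<subseteq> {..<length R} \<and> S \<noteq> {}"
proof -
  define v where "v = (\<lambda>i. omm (R ! i))"
  define N where "N = length R"
  define Fs where "Fs = nd_sort N v {..<N}"
  define istar where "istar = (LEAST i. mu \<le> (\<Sum>F\<leftarrow>take (Suc i) Fs. card F))"
  define Sel0 where "Sel0 = \<Union> (set (take istar Fs))"
  define L where "L = Fs ! istar"
  define ymin where "ymin = (Min ((\<lambda>x. real (ones x)) ` set (concat H')),
                 Min ((\<lambda>x. real (zeros x)) ` set (concat H')))"
  define fn where "fn = (\<lambda>i. ((fst (v i) - fst ymin) / (fst nd - fst ymin),
                    (snd (v i) - snd ymin) / (snd nd - snd ymin)))"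
  define as where "as = (\<lambda>i. LEAST a. a \<le> p \<and>
                   (\<forall>b\<le>p. infdist (fn i) (refline p a) \<le> infdist (fn i) (refline p b)))"
  define d where "d = (\<lambda>i. dist (fn i) (refpt p (as i)))"
  have surv: "survival mu p nd H' R = niche (card L + p + 1) mu L as d {..p} Sel0"
    by (simp only: survival_def Let_def v_def N_def Fs_def istar_def Sel0_def L_def ymin_def fn_def as_def d_def)
  have sets: "\<And>F. F \<in> set Fs \<Longrightarrow> F \<subseteq> {..<N} \<and> F \<noteq> {}"
    unfolding Fs_def by (rule nd_sort_sets) auto
  have sum: "(\<Sum>F\<leftarrow>Fs. card F) = N"
    unfolding Fs_def using nd_sort_sum[of "{..<N}" N v] by simp
  have "Fs \<noteq> []" using sum mu1 muR by (auto simp: N_def)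
  then have ex: "mu \<le> (\<Sum>F\<leftarrow>take (Suc (length Fs - 1)) Fs. card F)"
    using sum muR by (simp add: N_def)
  have "istar \<le> length Fs - 1" unfolding istar_def by (rule Least_le) (rule ex)
  then have ist: "istar < length Fs" using \<open>Fs \<noteq> []\<close> by (cases Fs) auto
  then have Lin: "L \<in> set Fs" by (simp add: L_def)
  then have L: "L \<subseteq> {..<N}" "L \<noteq> {}" using sets by auto
  have finL: "finite L" using L(1) finite_subset by blast
  have Sel0: "Sel0 \<subseteq> {..<N}" unfolding Sel0_def using sets by (auto dest: in_set_takeD)
  have finSel0: "finite Sel0" using Sel0 finite_subset by blast
  have asp: "as i \<le> p" for i
  proof -
    let ?f = "\<lambda>a. infdist (fn i) (refline p a)"
    define a where "a = arg_min_on ?f {..p}"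
    have a1: "a \<in> {..p}" unfolding a_def by (rule arg_min_if_finite) auto
    have a2: "\<not> (\<exists>x\<in>{..p}. ?f x < ?f a)" unfolding a_def by (rule arg_min_if_finite) auto
    have "a \<le> p \<and> (\<forall>b\<le>p. ?f a \<le> ?f b)" using a1 a2 by (simp add: not_less)
    then show ?thesis unfolding as_def by (rule LeastI2) auto
  qed
  have "card (L - Sel0) + card {..p} \<le> card L + p + 1"
    using finL by (simp add: card_mono)
  then have inv: "Sel0 \<subseteq> S \<and> S \<subseteq> Sel0 \<union> L \<and> (mu \<le> card S \<or> L \<subseteq> S)"
    using niche_inv[OF finL finSel0 _ _ _ S[unfolded surv]] asp by auto
  have "S \<noteq> {}"
  proof
    assume "S = {}"
    then show False using inv mu1 L(2) by auto
  qed
  then show ?thesis using inv L Sel0 by (auto simp: N_def)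
qed

definition good :: "nat \<Rightarrow> nat \<Rightarrow> bool list list \<Rightarrow> bool" where
  "good n A P \<longleftrightarrow> P \<noteq> [] \<and> (\<forall>y\<in>set P. length y = n \<and> ones y \<le> A)"

lemma offspring_bound:
  assumes "good n A P"
  shows "measure_pmf.prob (bind_pmf (pmf_of_set {..<length P}) (\<lambda>i. mutate n (P ! i)))
            {y. \<not> (length y = n \<and> ones y \<le> A + j)}
         \<le> real (n choose Suc j) * (1 / real n) ^ Suc j"
proof -
  have "measure_pmf.prob (bind_pmf (pmf_of_set {..<length P}) (\<lambda>i. mutate n (P ! i)))
            {y. \<not> (length y = n \<and> ones y \<le> A + j)}
        \<le> measure_pmf.prob (pmf_of_set {..<length P}) (- UNIV) + real (n choose Suc j) * (1 / real n) ^ Suc j"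
  proof (rule prob_bind_le)
    fix i assume i: "i \<in> set_pmf (pmf_of_set {..<length P})"
    have ne: "P \<noteq> []" using assms by (simp add: good_def)
    have "i < length P" using i ne by (subst (asm) set_pmf_of_set) auto
    then have x: "P ! i \<in> set P" by simp
    then have lx: "length (P ! i) = n" and ox: "ones (P ! i) \<le> A" using assms by (auto simp: good_def)
    have "measure_pmf.prob (mutate n (P ! i)) {y. \<not> (length y = n \<and> ones y \<le> A + j)}
        \<le> measure_pmf.prob (mutate n (P ! i)) {y. ones (P ! i) + Suc j \<le> ones y}"
      using ox lx by (intro prob_mono_support) (auto dest: set_pmf_mutate)
    also have "\<dots> \<le> real (n choose Suc j) * (1 / real n) ^ Suc j"
      using mutate_tail[of n "P ! i" "Suc j"] lx by simp
    finally show "measure_pmf.prob (mutate n (P ! i)) {y. \<not> (length y = n \<and> ones y \<le> A + j)}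
        \<le> real (n choose Suc j) * (1 / real n) ^ Suc j" .
  qed simp
  then show ?thesis by simp
qed

lemma step_bound:
  assumes "good n A P" "1 \<le> mu"
  shows "measure_pmf.prob (nsga3_step n mu p nadf (P, H)) {s. \<not> good n (A + j) (fst s)}
         \<le> real mu * (real (n choose Suc j) * (1 / real n) ^ Suc j)"
proof -
  define D where "D = bind_pmf (pmf_of_set {..<length P}) (\<lambda>i. mutate n (P ! i))"
  define Bad where "Bad = {y. \<not> (length y = n \<and> ones y \<le> A + j)}"
  have "measure_pmf.prob (nsga3_step n mu p nadf (P, H)) {s. \<not> good n (A + j) (fst s)}
     \<le> measure_pmf.prob (iid_list mu D) (- {Q. \<forall>y\<in>set Q. y \<notin> Bad}) + 0"
    unfolding nsga3_step_def case_prod_conv D_def[symmetric]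
  proof (rule prob_bind_le)
    fix Q assume Q: "Q \<in> set_pmf (iid_list mu D)" "Q \<in> {Q. \<forall>y\<in>set Q. y \<notin> Bad}"
    have lQ: "length Q = mu" using set_pmf_iid_list[OF Q(1)] by simp
    let ?R = "P @ Q"
    show "measure_pmf.prob (let R = ?R; H' = H @ [R]
          in map_pmf (\<lambda>S. (map ((!) R) (sorted_list_of_set S), H')) (survival mu p (nadf H') H' R))
          {s. \<not> good n (A + j) (fst s)} \<le> 0"
      unfolding Let_def
    proof -
      have "measure_pmf.prob (map_pmf (\<lambda>S. (map ((!) ?R) (sorted_list_of_set S), H @ [?R]))
            (survival mu p (nadf (H @ [?R])) (H @ [?R]) ?R)) {s. \<not> good n (A + j) (fst s)}
          \<le> measure_pmf.prob (map_pmf (\<lambda>S. (map ((!) ?R) (sorted_list_of_set S), H @ [?R]))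
            (survival mu p (nadf (H @ [?R])) (H @ [?R]) ?R)) {}"
      proof (rule prob_mono_support)
        fix s assume s: "s \<in> set_pmf (map_pmf (\<lambda>S. (map ((!) ?R) (sorted_list_of_set S), H @ [?R]))
            (survival mu p (nadf (H @ [?R])) (H @ [?R]) ?R))" "s \<in> {s. \<not> good n (A + j) (fst s)}"
        then obtain S where S: "S \<in> set_pmf (survival mu p (nadf (H @ [?R])) (H @ [?R]) ?R)"
          and sS: "s = (map ((!) ?R) (sorted_list_of_set S), H @ [?R])" by auto
        have sh: "S \<subseteq> {..<length ?R} \<and> S \<noteq> {}"
          using survival_shape[OF assms(2) _ S] lQ by simp
        then have finS: "finite S" using finite_subset by blast
        have "good n (A + j) (fst s)"
          unfolding good_def sS fst_conv
        proof
          show "map ((!) ?R) (sorted_list_of_set S) \<noteq> []" using sh finS by simp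
          show "\<forall>y\<in>set (map ((!) ?R) (sorted_list_of_set S)). length y = n \<and> ones y \<le> A + j"
          proof
            fix y assume "y \<in> set (map ((!) ?R) (sorted_list_of_set S))"
            then obtain i where i: "i \<in> S" "y = ?R ! i" using finS by auto
            then have "i < length ?R" using sh by auto
            then have "y \<in> set P \<or> y \<in> set Q" using i by (auto simp: nth_append)
            then show "length y = n \<and> ones y \<le> A + j"
              using assms(1) Q(2) by (auto simp: good_def Bad_def)
          qed
        qed
        then show "s \<in> {}" using s(2) by simp
      qed
      then show "measure_pmf.prob (map_pmf (\<lambda>S. (map ((!) ?R) (sorted_list_of_set S), H @ [?R]))
            (survival mu p (nadf (H @ [?R])) (H @ [?R]) ?R)) {s. \<not> good n (A + j) (fst s)} \<le> 0"
        by simp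
    qed
  qed simp
  also have "\<dots> = measure_pmf.prob (iid_list mu D) {xs. \<exists>x\<in>set xs. x \<in> Bad}"
    by (simp add: Compl_eq set_diff_eq)
  also have "\<dots> \<le> real mu * measure_pmf.prob D Bad" by (rule iid_list_union)
  also have "\<dots> \<le> real mu * (real (n choose Suc j) * (1 / real n) ^ Suc j)"
    unfolding D_def Bad_def by (intro mult_left_mono offspring_bound assms) auto
  finally show ?thesis .
qed

lemma run_bound:
  assumes "1 \<le> mu"
  shows "measure_pmf.prob (nsga3_run n mu p nadf t) {s. \<not> good n (A0 + t * j) (fst s)}
    \<le> real mu * measure_pmf.prob (pmf_of_set {x :: bool list. length x = n}) {y. Suc A0 \<le> ones y}
      + real t * (real mu * (real (n choose Suc j) * (1 / real n) ^ Suc j))"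
proof (induction t)
  case 0
  let ?U = "pmf_of_set {x :: bool list. length x = n}"
  have fin: "finite {x :: bool list. length x = n}"
    using finite_lists_length_eq[of "UNIV :: bool set" n] by simp
  have ne: "{x :: bool list. length x = n} \<noteq> {}" by (auto intro: exI[of _ "replicate n True"])
  have "measure_pmf.prob (nsga3_run n mu p nadf 0) {s. \<not> good n (A0 + 0 * j) (fst s)}
      = measure_pmf.prob (iid_list mu ?U) {P. \<not> good n A0 P}"
    by (simp add: vimage_def)
  also have "\<dots> \<le> measure_pmf.prob (iid_list mu ?U) {xs. \<exists>x\<in>set xs. x \<in> {y. Suc A0 \<le> ones y}}"
  proof (rule prob_mono_support)
    fix P assume P: "P \<in> set_pmf (iid_list mu ?U)" "P \<in> {P. \<not> good n A0 P}"
    from set_pmf_iid_list[OF P(1)] have "length P = mu" "set P \<subseteq> {x. length x = n}"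
      using fin ne by auto
    then show "P \<in> {xs. \<exists>x\<in>set xs. x \<in> {y. Suc A0 \<le> ones y}}"
      using P(2) assms by (auto simp: good_def not_le Suc_le_eq)
  qed
  also have "\<dots> \<le> real mu * measure_pmf.prob ?U {y. Suc A0 \<le> ones y}" by (rule iid_list_union)
  finally show ?case by simp
next
  case (Suc t)
  have "measure_pmf.prob (nsga3_run n mu p nadf (Suc t)) {s. \<not> good n (A0 + Suc t * j) (fst s)}
     \<le> measure_pmf.prob (nsga3_run n mu p nadf t) (- {s. good n (A0 + t * j) (fst s)})
       + real mu * (real (n choose Suc j) * (1 / real n) ^ Suc j)"
    unfolding nsga3_run.simps
  proof (rule prob_bind_le)
    fix s :: "bool list list \<times> bool list list list" assume s: "s \<in> {s. good n (A0 + t * j) (fst s)}"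
    obtain P H where sP: "s = (P, H)" by (cases s)
    show "measure_pmf.prob (nsga3_step n mu p nadf s) {s. \<not> good n (A0 + Suc t * j) (fst s)}
        \<le> real mu * (real (n choose Suc j) * (1 / real n) ^ Suc j)"
      using step_bound[of n "A0 + t * j" P mu p nadf H j] s assms
      by (simp add: sP algebra_simps)
  qed simp
  also have "\<dots> \<le> real mu * measure_pmf.prob (pmf_of_set {x :: bool list. length x = n}) {y. Suc A0 \<le> ones y}
      + real t * (real mu * (real (n choose Suc j) * (1 / real n) ^ Suc j))
      + real mu * (real (n choose Suc j) * (1 / real n) ^ Suc j)"
    using Suc.IH by (simp add: Compl_eq)
  finally have fin: "measure_pmf.prob (nsga3_run n mu p nadf (Suc t)) {s. \<not> good n (A0 + Suc t * j) (fst s)} \<le> real mu * measure_pmf.prob (pmf_of_set {x :: bool list. length x = n}) {y. Suc A0 \<le> ones y}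
      + real t * (real mu * (real (n choose Suc j) * (1 / real n) ^ Suc j))
      + real mu * (real (n choose Suc j) * (1 / real n) ^ Suc j)" .
  have e: "real (Suc t) * X = real t * X + X" for X :: real by (simp add: algebra_simps)
  show ?case using fin e[of "real mu * (real (n choose Suc j) * (1 / real n) ^ Suc j)"] by linarith
qed

lemma exp_ge_pow_fact: "(x::real) \<ge> 0 \<Longrightarrow> x ^ k / fact k \<le> exp x"
proof -
  assume x: "x \<ge> 0"
  have s: "(\<lambda>n. x ^ n / fact n) sums exp x"
    using exp_converges[of x] by (simp add: divide_inverse mult.commute)
  have "sum (\<lambda>n. x ^ n / fact n) {k} \<le> suminf (\<lambda>n. x ^ n / fact n)"
    by (rule sum_le_suminf) (use s x in \<open>auto simp: sums_iff\<close>)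
  then show ?thesis using s by (simp add: sums_iff)
qed

lemma fact_lower:
  fixes L :: real
  assumes "exp 1 \<le> L" "L \<le> real k"
  shows "(L / exp 1) powr L \<le> fact k"
proof -
  have Lpos: "L > 0" using assms(1) by (smt (verit) exp_gt_zero)
  have kpos: "real k > 0" using assms Lpos by linarith
  have b1: "1 \<le> L / exp 1" using assms(1) by simp
  have "(L / exp 1) powr L \<le> (L / exp 1) powr (real k)"
    using b1 assms(2) by (intro powr_mono) auto
  also have "\<dots> = (L / exp 1) ^ k"
    using Lpos by (simp add: powr_realpow)
  also have "\<dots> \<le> (real k / exp 1) ^ k"
    using Lpos assms(2) by (intro power_mono divide_right_mono) auto
  also have "\<dots> = real k ^ k / exp (real k)"
    by (simp add: power_divide exp_of_nat_mult[symmetric])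
  also have "\<dots> \<le> fact k"
    using exp_ge_pow_fact[of "real k" k] by (simp add: divide_le_eq mult.commute)
  finally show ?thesis .
qed

lemma binom_fact:
  assumes "n > 0"
  shows "real (n choose k) * (1 / real n) ^ k \<le> 1 / fact k"
proof -
  have "real (n choose k) * fact k \<le> real n ^ k"
    using binomial_fact_pow[of n k] by (metis of_nat_fact of_nat_le_iff of_nat_mult of_nat_power)
  moreover have pos: "real n ^ k > 0" "(fact k :: real) > 0" using assms by auto
  ultimately have "real (n choose k) \<le> real n ^ k / fact k"
    by (simp add: pos_le_divide_eq)
  then have "real (n choose k) / real n ^ k \<le> 1 / fact k"
    using pos by (simp add: pos_divide_le_eq)
  then show ?thesis by (simp add: power_one_over)
qed

lemma r_less: "(3/2::real) / 2 powr (2/3) < 1"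
proof -
  have e: "((2::real) powr (2/3)) ^ 3 = 2 powr (of_nat 3 * (2/3))"
    by (rule powr_power) simp
  have "(2::real) powr (of_nat 3 * (2/3)) = 4" by simp
  moreover have "(3/2::real) ^ 3 < 4" by (simp add: power3_eq_cube)
  ultimately have "(3/2::real) ^ 3 < (2 powr (2/3)) ^ 3" using e by simp
  then have "3/2 < (2::real) powr (2/3)"
    by (rule power_less_imp_less_base) auto
  then show ?thesis by simp
qed

lemma nat_floor_bounds:
  fixes x :: real assumes "0 \<le> x"
  shows "real (nat \<lfloor>x\<rfloor>) \<le> x" "x - 1 < real (nat \<lfloor>x\<rfloor>)"
  using assms by (auto simp: of_nat_nat)

lemma pointwise:
  fixes n mu K :: nat and C c :: real
  assumes n2: "n \<ge> 2" and mu1: "1 \<le> mu" and muC: "real mu \<le> C * real n ^ K"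
    and c0: "c > 0" and cln: "c \<le> ln (real n)" and Le: "exp 1 \<le> (1 / (13 * c)) * ln (real n)"
    and C0: "C > 0"
  shows "measure_pmf.prob (nsga3_run n mu p nadf (nat \<lfloor>c * real n / ln (real n)\<rfloor>))
            {s. \<exists>y\<in>set (fst s). real (ones y) \<ge> 3 * real n / 4}
     \<le> C * real n ^ K * ((3/2) / 2 powr (2/3)) ^ n
       + C * real n ^ (K + 1) / (((1 / (13 * c)) * ln (real n) / exp 1) powr ((1 / (13 * c)) * ln (real n)))"
proof -
  define T where "T = nat \<lfloor>c * real n / ln (real n)\<rfloor>"
  define L where "L = (1 / (13 * c)) * ln (real n)"
  define j where "j = nat \<lfloor>L\<rfloor>"
  define A0 where "A0 = 2 * n div 3"
  define r where "r = (3/2::real) / 2 powr (2/3)"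
  have lnpos: "ln (real n) > 0" using n2 by simp
  have L0: "0 \<le> L" using lnpos c0 by (simp add: L_def)
  have T1: "real T \<le> c * real n / ln (real n)" unfolding T_def
    by (rule nat_floor_bounds) (use c0 lnpos in auto)
  have j1: "real j \<le> L" "L - 1 < real j" unfolding j_def using nat_floor_bounds[OF L0] by auto
  have Tj: "real T * real j \<le> (c * real n / ln (real n)) * L"
    using T1 j1 L0 by (intro mult_mono) auto
  also have "\<dots> = real n / 13" using c0 lnpos by (simp add: L_def field_simps)
  finally have Tj': "real (T * j) \<le> real n / 13" by simp
  have A0n: "3 * A0 \<le> 2 * n" "2 * n \<le> 3 * A0 + 2" unfolding A0_def by presburger+
  then have A0r': "3 * real A0 \<le> 2 * real n" "2 * real n \<le> 3 * real A0 + 2"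
    by linarith+
  have A0r: "real A0 \<le> 2 * real n / 3" using A0r' by linarith
  have "measure_pmf.prob (nsga3_run n mu p nadf T) {s. \<exists>y\<in>set (fst s). real (ones y) \<ge> 3 * real n / 4}
      \<le> measure_pmf.prob (nsga3_run n mu p nadf T) {s. \<not> good n (A0 + T * j) (fst s)}"
  proof (rule prob_mono_support)
    fix s assume "s \<in> {s. \<exists>y\<in>set (fst s). real (ones y) \<ge> 3 * real n / 4}"
    then obtain y where y: "y \<in> set (fst s)" "real (ones y) \<ge> 3 * real n / 4" by auto
    show "s \<in> {s. \<not> good n (A0 + T * j) (fst s)}"
    proof
      show "\<not> good n (A0 + T * j) (fst s)"
      proof
        assume "good n (A0 + T * j) (fst s)"
        then have "ones y \<le> A0 + T * j" using y(1) by (auto simp: good_def)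
        then have "real (ones y) \<le> real A0 + real (T * j)" by linarith
        then show False using y(2) A0r Tj' n2 by linarith
      qed
    qed
  qed
  also have "\<dots> \<le> real mu * measure_pmf.prob (pmf_of_set {x :: bool list. length x = n}) {y. Suc A0 \<le> ones y}
      + real T * (real mu * (real (n choose Suc j) * (1 / real n) ^ Suc j))"
    by (rule run_bound[OF mu1])
  also have "\<dots> \<le> C * real n ^ K * r ^ n
      + C * real n ^ (K + 1) / ((L / exp 1) powr L)"
  proof (rule add_mono)
    have "measure_pmf.prob (pmf_of_set {x :: bool list. length x = n}) {y. Suc A0 \<le> ones y}
        \<le> (3 / 2) ^ n / 2 ^ Suc A0" by (rule uniform_tail)
    also have "\<dots> \<le> r ^ n"
    proof -
      have "real (Suc A0) \<ge> 2 * real n / 3" using A0r' by simp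
      then have "(2::real) powr (2 * real n / 3) \<le> 2 powr real (Suc A0)"
        by (intro powr_mono) auto
      also have "\<dots> = 2 ^ Suc A0" by (rule powr_realpow) simp
      finally have h: "(2::real) powr (2 * real n / 3) \<le> 2 ^ Suc A0" .
      have e: "((2::real) powr (2/3)) ^ n = 2 powr (of_nat n * (2/3))"
        by (rule powr_power) simp
      have "r ^ n = (3/2) ^ n / 2 powr (2 * real n / 3)"
        unfolding r_def power_divide e by (simp add: mult.commute)
      then show ?thesis using h by (simp add: frac_le)
    qed
    finally have a: "measure_pmf.prob (pmf_of_set {x :: bool list. length x = n}) {y. Suc A0 \<le> ones y} \<le> r ^ n" .
    have r0: "0 \<le> r ^ n" unfolding r_def by simp
    show "real mu * measure_pmf.prob (pmf_of_set {x :: bool list. length x = n}) {y. Suc A0 \<le> ones y}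
        \<le> C * real n ^ K * r ^ n"
      using mult_mono[OF muC a _ measure_nonneg] C0 by simp
  next
    have b: "real (n choose Suc j) * (1 / real n) ^ Suc j \<le> 1 / fact (Suc j)"
      by (rule binom_fact) (use n2 in auto)
    have f: "(L / exp 1) powr L \<le> fact (Suc j)"
      by (rule fact_lower) (use Le j1 in \<open>auto simp: L_def\<close>)
    have fpos: "(L / exp 1) powr L > 0" using Le L0 by (auto simp: L_def)
    have Tn: "real T \<le> real n"
    proof -
      have "c * real n / ln (real n) \<le> real n"
      proof -
        have "c * real n \<le> ln (real n) * real n" using cln by (intro mult_right_mono) auto
        then show ?thesis using lnpos by (simp add: divide_le_eq mult.commute)
      qed
      then show ?thesis using T1 by linarith
    qed
    have "real T * (real mu * (real (n choose Suc j) * (1 / real n) ^ Suc j))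
        \<le> real n * (C * real n ^ K * (1 / fact (Suc j)))"
      using Tn C0 by (intro mult_mono muC b) auto
    also have "\<dots> \<le> real n * (C * real n ^ K * (1 / ((L / exp 1) powr L)))"
      using f fpos C0 by (intro mult_left_mono) (auto intro!: divide_left_mono)
    also have "\<dots> = C * real n ^ (K + 1) / ((L / exp 1) powr L)"
      by (simp add: algebra_simps)
    finally show "real T * (real mu * (real (n choose Suc j) * (1 / real n) ^ Suc j))
        \<le> C * real n ^ (K + 1) / ((L / exp 1) powr L)" .
  qed
  finally show ?thesis by (simp add: T_def L_def r_def)
qed

lemma lim_geom: fixes r :: real and K :: nat assumes "0 < r" "r < 1"
  shows "(\<lambda>n. real n ^ K * r ^ n) \<longlonglongrightarrow> 0"
  using assms by real_asymp

lemma lim_fact: fixes d :: real and K :: nat assumes "d > 0"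
  shows "(\<lambda>n. real n ^ K / ((d * ln (real n) / exp 1) powr (d * ln (real n)))) \<longlonglongrightarrow> 0"
  using assms by real_asymp

lemma ev_ln: fixes c :: real shows "eventually (\<lambda>n::nat. c \<le> ln (real n)) sequentially"
proof -
  have "filterlim (\<lambda>n::nat. ln (real n)) at_top sequentially"
    by (rule filterlim_compose[OF ln_at_top filterlim_real_sequentially])
  then show ?thesis by (simp add: filterlim_at_top)
qed

theorem lemma5:
  fixes mu p :: "nat \<Rightarrow> nat" and eps :: "nat \<Rightarrow> real"
    and nadf :: "nat \<Rightarrow> bool list list list \<Rightarrow> real \<times> real" and c :: real
  assumes "\<forall>n. mu n \<ge> n + 1"
    and "\<exists>k::nat. (\<lambda>n. real (mu n)) \<in> O(\<lambda>n. real n ^ k)"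
    and "\<forall>n. eps n \<ge> real n"
    and "\<forall>n. real (p n) \<ge> 4 * sqrt 2 * real n"
    and "\<forall>n H. eps n \<le> fst (nadf n H) \<and> eps n \<le> snd (nadf n H)"
    and "c > 0"
  shows "(\<lambda>n. measure_pmf.prob (nsga3_run n (mu n) (p n) (nadf n) (nat \<lfloor>c * real n / ln (real n)\<rfloor>))
            {s. \<exists>y\<in>set (fst s). real (ones y) \<ge> 3 * real n / 4}) \<longlonglongrightarrow> 0"
proof -
  obtain K where hK: "(\<lambda>n. real (mu n)) \<in> O(\<lambda>n. real n ^ K)" using assms(2) by blast
  obtain C where C0: "C > 0" and evC: "eventually (\<lambda>n. norm (real (mu n)) \<le> C * norm (real n ^ K)) at_top"
    using landau_o.bigE[OF hK] by blast
  define d where "d = 1 / (13 * c)"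
  have d0: "d > 0" using assms(6) by (simp add: d_def)
  define r where "r = (3/2::real) / 2 powr (2/3)"
  have r0: "0 < r" "r < 1" using r_less by (auto simp: r_def)
  define B where "B = (\<lambda>n. C * (real n ^ K * r ^ n)
       + C * (real n ^ (K + 1) / ((d * ln (real n) / exp 1) powr (d * ln (real n)))))"
  have limB: "B \<longlonglongrightarrow> 0"
  proof -
    have "(\<lambda>n. C * (real n ^ K * r ^ n)) \<longlonglongrightarrow> C * 0"
      by (intro tendsto_mult tendsto_const lim_geom r0)
    moreover have "(\<lambda>n. C * (real n ^ (K + 1) / ((d * ln (real n) / exp 1) powr (d * ln (real n))))) \<longlonglongrightarrow> C * 0"
      by (intro tendsto_mult tendsto_const lim_fact d0)
    ultimately have "B \<longlonglongrightarrow> C * 0 + C * 0" unfolding B_def by (rule tendsto_add)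
    then show ?thesis by simp
  qed
  have evL: "eventually (\<lambda>n::nat. exp 1 / d \<le> ln (real n)) sequentially" by (rule ev_ln)
  have evU: "eventually (\<lambda>n. measure_pmf.prob (nsga3_run n (mu n) (p n) (nadf n) (nat \<lfloor>c * real n / ln (real n)\<rfloor>))
            {s. \<exists>y\<in>set (fst s). real (ones y) \<ge> 3 * real n / 4} \<le> B n) sequentially"
    using eventually_ge_at_top[of 2] evC ev_ln[of c] evL
  proof eventually_elim
    case (elim n)
    have "n + 1 \<le> mu n" using assms(1) by blast
    then have mu1: "1 \<le> mu n" by linarith
    have L0: "exp 1 \<le> d * ln (real n)"
      using elim(4) d0 by (simp add: divide_le_eq mult.commute)
    then have L: "exp 1 \<le> (1 / (13 * c)) * ln (real n)" unfolding d_def .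
    have "measure_pmf.prob (nsga3_run n (mu n) (p n) (nadf n) (nat \<lfloor>c * real n / ln (real n)\<rfloor>))
            {s. \<exists>y\<in>set (fst s). real (ones y) \<ge> 3 * real n / 4}
     \<le> C * real n ^ K * ((3/2) / 2 powr (2/3)) ^ n
       + C * real n ^ (K + 1) / (((1 / (13 * c)) * ln (real n) / exp 1) powr ((1 / (13 * c)) * ln (real n)))"
      by (rule pointwise) (use elim mu1 assms(6) C0 L in auto)
    then show ?case by (simp add: B_def d_def r_def)
  qed
  show ?thesis
    by (rule tendsto_sandwich[OF _ evU tendsto_const limB]) (simp add: measure_nonneg)
qed

end
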